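(* Let $r\ge 1$, $n$ be integers and let $\sigma,\sigma':\mathbb{Z}_n\to\{0,1\}$ be configurations with $\mathrm{maj}_r(\sigma)=\sigma'$. If $i\in\mathbb{Z}_n$ satisfies $\sigma'(i)\ne\sigma'(i+1)$, then $\#_0(\sigma[[i-r+1,i+r]])=\#_1(\sigma[[i-r+1,i+r]])$, where $[i-r+1,i+r]=\Gamma_r(i)\cap\Gamma_r(i+1)$.
   Context: Cells are elements of $\mathbb{Z}_n$, arithmetic mod $n$; $[a,b]$ denotes the cyclic interval $a,a+1,\dots,b$ and $\Gamma_r(i)=[i-r,i+r]$. For a configuration $\sigma$ and $\beta\in\{0,1\}$, $\#_\beta(\sigma[I])$ counts cells $\ell\in I$ with $\sigma(\ell)=\beta$. The majority rule with radius $r$: $\mathrm{maj}_r(\sigma)(i)=0$ if $\#_0(\sigma[\Gamma_r(i)])>\#_1(\sigma[\Gamma_r(i)])$ and $=1$ otherwise. *)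

theory Defs
  imports Main
begin

text \<open>Cells of Z_n are represented by the integers 0..n-1; a configuration is a
function int \<Rightarrow> nat whose values on the cells lie in {0,1}.\<close>

definition cells :: "int \<Rightarrow> int set" where
  "cells n = {0..<n}"

definition cyc_interval :: "int \<Rightarrow> int \<Rightarrow> int \<Rightarrow> int set" where
  "cyc_interval n a b = (\<lambda>l. l mod n) ` {a..b}"

definition Gamma :: "int \<Rightarrow> int \<Rightarrow> int \<Rightarrow> int set" where
  "Gamma n r i = cyc_interval n (i - r) (i + r)"

definition cnt :: "nat \<Rightarrow> (int \<Rightarrow> nat) \<Rightarrow> int set \<Rightarrow> nat" where
  "cnt \<beta> \<sigma> I = card {l \<in> I. \<sigma> l = \<beta>}"

definition is_config :: "int \<Rightarrow> (int \<Rightarrow> nat) \<Rightarrow> bool" where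
  "is_config n \<sigma> \<longleftrightarrow> (\<forall>i \<in> cells n. \<sigma> i \<in> {0, 1})"

definition maj :: "int \<Rightarrow> int \<Rightarrow> (int \<Rightarrow> nat) \<Rightarrow> int \<Rightarrow> nat" where
  "maj n r \<sigma> i = (if cnt 0 \<sigma> (Gamma n r i) > cnt 1 \<sigma> (Gamma n r i) then 0 else 1)"

end

theory Submission
  imports Defs
begin

lemma cyc_full:
  assumes "n \<ge> 1" "b - a + 1 \<ge> n"
  shows "cyc_interval n a b = cells n"
proof
  show "cyc_interval n a b \<subseteq> cells n"
    using assms by (auto simp: cyc_interval_def cells_def)
  show "cells n \<subseteq> cyc_interval n a b"
  proof
    fix k assume k: "k \<in> cells n"
    define l where "l = a + (k - a) mod n"
    have "(k - a) mod n < n" "0 \<le> (k - a) mod n" using assms by auto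
    then have "l \<in> {a..b}" using assms unfolding l_def atLeastAtMost_iff by linarith
    moreover have "l mod n = k" using k unfolding l_def cells_def
      by (simp add: mod_add_right_eq)
    ultimately show "k \<in> cyc_interval n a b" unfolding cyc_interval_def by force
  qed
qed

lemma inj_mod:
  assumes "b - a < n"
  shows "inj_on (\<lambda>l::int. l mod n) {a..b}"
proof
  fix x y assume xy: "x \<in> {a..b}" "y \<in> {a..b}" "x mod n = y mod n"
  then have "n dvd (x - y)" by (simp add: mod_eq_dvd_iff)
  then obtain k where k: "x - y = n * k" by (auto simp: dvd_def)
  have "\<bar>x - y\<bar> < n" using xy assms by auto
  then have "k = 0" using k
    by (smt (verit, best) mult_le_cancel_left1 mult_minus_right)
  then show "x = y" using k by simp
qed

lemma cyc_shift:
  assumes "c mod n = c' mod n"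
  shows "cyc_interval n (a + c) (b + c) = cyc_interval n (a + c') (b + c')"
proof -
  have 1: "\<And>d. cyc_interval n (a + d) (b + d) = (\<lambda>l. (l + d) mod n) ` {a..b}"
  proof -
    fix d :: int
    have "{a + d..b + d} = (\<lambda>l. l + d) ` {a..b}"
      by (auto simp: image_iff intro!: exI[where x="_ - d"])
    then show "cyc_interval n (a + d) (b + d) = (\<lambda>l. (l + d) mod n) ` {a..b}"
      unfolding cyc_interval_def by (simp only: image_image)
  qed
  have "\<And>l. (l + c) mod n = (l + c') mod n" using assms by (metis mod_add_right_eq)
  then show ?thesis unfolding 1 by simp
qed

lemma cnt_insert:
  assumes "finite I" "x \<notin> I"
  shows "cnt \<beta> \<sigma> (insert x I) = cnt \<beta> \<sigma> I + (if \<sigma> x = \<beta> then 1 else 0)"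
proof -
  have "{l \<in> insert x I. \<sigma> l = \<beta>} = (if \<sigma> x = \<beta> then insert x {l \<in> I. \<sigma> l = \<beta>} else {l \<in> I. \<sigma> l = \<beta>})"
    by auto
  then show ?thesis using assms unfolding cnt_def by simp
qed

lemma cnt_sum:
  assumes "finite I" "\<forall>l\<in>I. \<sigma> l \<in> {0,1}"
  shows "cnt 0 \<sigma> I + cnt 1 \<sigma> I = card I"
proof -
  have "{l \<in> I. \<sigma> l = 0} \<union> {l \<in> I. \<sigma> l = 1} = I" using assms by auto
  moreover have "{l \<in> I. \<sigma> l = 0} \<inter> {l \<in> I. \<sigma> l = 1} = {}" by auto
  ultimately show ?thesis unfolding cnt_def using assms
    by (metis (no_types, lifting) card_Un_disjoint finite_Un)
qed

theorem claim2:
  fixes n r :: int and \<sigma> \<sigma>' :: "int \<Rightarrow> nat" and i :: int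
  assumes "r \<ge> 1" and "n \<ge> 1"
    and "is_config n \<sigma>" and "is_config n \<sigma>'"
    and "\<forall>j \<in> cells n. \<sigma>' j = maj n r \<sigma> j"
    and "i \<in> cells n"
    and "\<sigma>' i \<noteq> \<sigma>' ((i + 1) mod n)"
  shows "cnt 0 \<sigma> (cyc_interval n (i - r + 1) (i + r))
       = cnt 1 \<sigma> (cyc_interval n (i - r + 1) (i + r))"
proof -
  have ip: "(i + 1) mod n \<in> cells n" using assms(2) by (simp add: cells_def)
  have m1: "\<sigma>' i = maj n r \<sigma> i" using assms(5,6) by blast
  have m2: "\<sigma>' ((i + 1) mod n) = maj n r \<sigma> ((i + 1) mod n)" using assms(5) ip by blast
  have G2: "Gamma n r ((i + 1) mod n) = cyc_interval n (i + 1 - r) (i + 1 + r)"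
    unfolding Gamma_def using cyc_shift[of "(i+1) mod n" n "i+1" "-r" r]
    by (simp add: algebra_simps)
  show ?thesis
  proof (cases "n \<le> 2 * r + 1")
    case True
    have "Gamma n r i = cells n" unfolding Gamma_def using cyc_full assms True by simp
    moreover have "Gamma n r ((i + 1) mod n) = cells n" unfolding G2 using cyc_full assms True by simp
    ultimately have "maj n r \<sigma> i = maj n r \<sigma> ((i + 1) mod n)" unfolding maj_def by simp
    then show ?thesis using m1 m2 assms(7) by simp
  next
    case False
    define I where "I = cyc_interval n (i - r + 1) (i + r)"
    have fin: "finite I" unfolding I_def cyc_interval_def by simp
    have inj1: "inj_on (\<lambda>l. l mod n) {i - r..i + r}" using inj_mod False by simp
    have inj2: "inj_on (\<lambda>l. l mod n) {i + 1 - r..i + 1 + r}" using inj_mod False by simp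
    have cardI: "int (card I) = 2 * r"
    proof -
      have "inj_on (\<lambda>l. l mod n) {i - r + 1..i + r}"
        using inj_mod False by simp
      then have "card I = card {i - r + 1..i + r}" unfolding I_def cyc_interval_def
        by (simp add: card_image)
      then show ?thesis using assms(1) by simp
    qed
    have seq1: "{i - r..i + r} = insert (i - r) {i - r + 1..i + r}" using assms(1) by auto
    have seq2: "{i + 1 - r..i + 1 + r} = insert (i + 1 + r) {i - r + 1..i + r}" using assms(1) by auto
    have G1': "Gamma n r i = insert ((i - r) mod n) I"
      unfolding Gamma_def cyc_interval_def I_def seq1 by simp
    have G2': "Gamma n r ((i + 1) mod n) = insert ((i + 1 + r) mod n) I"
      unfolding G2 cyc_interval_def I_def seq2 by simp
    have n1: "(i - r) mod n \<notin> I"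
    proof
      assume "(i - r) mod n \<in> I"
      then obtain l where l: "l \<in> {i - r + 1..i + r}" "l mod n = (i - r) mod n"
        unfolding I_def cyc_interval_def by auto
      then have "l = i - r" using inj1 unfolding inj_on_def
        by (metis (no_types, lifting) seq1 insertCI)
      then show False using l by simp
    qed
    have n2: "(i + 1 + r) mod n \<notin> I"
    proof
      assume "(i + 1 + r) mod n \<in> I"
      then obtain l where l: "l \<in> {i - r + 1..i + r}" "l mod n = (i + 1 + r) mod n"
        unfolding I_def cyc_interval_def by auto
      then have "l = i + 1 + r" using inj2 unfolding inj_on_def
        by (metis (no_types, lifting) seq2 insertCI)
      then show False using l by simp
    qed
    have inc: "\<And>l. l mod n \<in> cells n" using assms(2) by (simp add: cells_def)
    have val: "\<And>l. \<sigma> (l mod n) \<in> {0,1}" using assms(3) inc unfolding is_config_def by blast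
    have "\<forall>l\<in>I. \<sigma> l \<in> {0,1}" using val unfolding I_def cyc_interval_def by auto
    then have sum: "int (cnt 0 \<sigma> I) + int (cnt 1 \<sigma> I) = 2 * r"
      using cnt_sum[OF fin] cardI by (metis of_nat_add)
    define a where "a = cnt 0 \<sigma> I"
    define b where "b = cnt 1 \<sigma> I"
    have c1: "maj n r \<sigma> i = (if a + (if \<sigma> ((i - r) mod n) = 0 then 1 else 0)
         > b + (if \<sigma> ((i - r) mod n) = 1 then 1 else 0) then 0 else 1)"
      unfolding maj_def G1' cnt_insert[OF fin n1] a_def b_def ..
    have c2: "maj n r \<sigma> ((i + 1) mod n) = (if a + (if \<sigma> ((i + 1 + r) mod n) = 0 then 1 else 0)
         > b + (if \<sigma> ((i + 1 + r) mod n) = 1 then 1 else 0) then 0 else 1)"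
      unfolding maj_def G2' cnt_insert[OF fin n2] a_def b_def ..
    have v1: "\<sigma> ((i - r) mod n) \<in> {0,1}" and v2: "\<sigma> ((i + 1 + r) mod n) \<in> {0,1}" using val by auto
    have ne: "maj n r \<sigma> i \<noteq> maj n r \<sigma> ((i + 1) mod n)" using m1 m2 assms(7) by simp
    have "int a + int b = 2 * r" using sum a_def b_def by simp
    then have "a = b" using ne v1 v2 unfolding c1 c2
      by (auto split: if_splits) presburger+
    then show ?thesis unfolding I_def a_def b_def by simp
  qed
qed

end
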